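(* Let $m\in\mathbb{N}$, $m\geq2$, and $T:[0,1)\to[0,1)$, $T(x)=mx\bmod 1$. Let $0\le a<b\le 1$ so that $(a,b)\subset[0,1)$ is a nonempty open interval (the hole), and let $$A=\{x\in[0,1): T^n(x)\notin(a,b)\text{ for all }n\geq 0\}$$ be the survival set. Then for every $t\in(0,1)$ that has a universal $m$-adic expansion, $$A-t\subset\mathbb{Q}^c,\qquad A+t\subset\mathbb{Q}^c,\qquad \frac{A}{t}\subset\mathbb{Q}^c.$$ Moreover, if $t\in(1,\infty)$ and $1/t$ has a universal $m$-adic expansion, then $tA\subset\mathbb{Q}^c$.
   Context: An $m$-adic expansion of $t\in(0,1)$ is a sequence $(t_k)\in\{0,1,\dots,m-1\}^{\mathbb{N}}$ with $t=\sum_{k\geq1}t_k m^{-k}$. Such an expansion is universal if for every $k\geq1$ and every word $x_1\cdots x_k\in\{0,\dots,m-1\}^k$ there is $k_0\in\mathbb{N}$ with $t_{k_0+1}\cdots t_{k_0+k}=x_1\cdots x_k$; $t$ has a universal $m$-adic expansion if some $m$-adic expansion of it is universal. Notation: $A\pm t=\{x\pm t:x\in A\}$, $tA=\{tx:x\in A\setminus\{0\}\}$, $\frac{A}{t}=\{t^{-1}x:x\in A\setminus\{0\}\}$. $\mathbb{Q}^c$ denotes the set of irrational real numbers. *)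

theory Defs
  imports "HOL-Analysis.Analysis"
begin

definition times_m_mod1 :: "nat \<Rightarrow> real \<Rightarrow> real" where
  "times_m_mod1 m x = frac (real m * x)"

definition survivor_set :: "nat \<Rightarrow> real \<Rightarrow> real \<Rightarrow> real set" where
  "survivor_set m a b = {x \<in> {0..<1}. \<forall>n. (times_m_mod1 m ^^ n) x \<notin> {a<..<b}}"

text \<open>An m-adic expansion of t: digits d 0, d 1, ... (d k is the paper's t_(k+1)).\<close>
definition is_m_adic_expansion :: "nat \<Rightarrow> (nat \<Rightarrow> nat) \<Rightarrow> real \<Rightarrow> bool" where
  "is_m_adic_expansion m d t \<longleftrightarrow>
     (\<forall>k. d k < m) \<and> (\<lambda>k. real (d k) / real m ^ (Suc k)) sums t"

definition universal_expansion :: "nat \<Rightarrow> (nat \<Rightarrow> nat) \<Rightarrow> bool" where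
  "universal_expansion m d \<longleftrightarrow>
     (\<forall>w. w \<noteq> [] \<and> set w \<subseteq> {..<m} \<longrightarrow>
        (\<exists>k0. \<forall>i<length w. d (k0 + i) = w ! i))"

definition has_universal_expansion :: "nat \<Rightarrow> real \<Rightarrow> bool" where
  "has_universal_expansion m t \<longleftrightarrow>
     (\<exists>d. is_m_adic_expansion m d t \<and> universal_expansion m d)"

end

theory Submission
  imports Defs
begin


definition wval :: "nat \<Rightarrow> nat list \<Rightarrow> int" where
  "wval m w = foldl (\<lambda>acc x. int m * acc + int x) 0 w"

lemma wval_Nil[simp]: "wval m [] = 0" by (simp add: wval_def)
lemma wval_snoc[simp]: "wval m (w @ [x]) = int m * wval m w + int x" by (simp add: wval_def)

lemma wval_append: "wval m (w1 @ w2) = int m ^ length w2 * wval m w1 + wval m w2"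
proof (induction w2 rule: rev_induct)
  case Nil then show ?case by simp
next
  case (snoc x xs)
  have "wval m (w1 @ xs @ [x]) = int m * wval m (w1 @ xs) + int x"
    using wval_snoc[of m "w1 @ xs" x] by simp
  then show ?case using snoc by (simp add: algebra_simps)
qed

lemma wval_bounds:
  assumes "set w \<subseteq> {..<m}"
  shows "0 \<le> wval m w \<and> wval m w < int m ^ length w"
  using assms
proof (induction w rule: rev_induct)
  case Nil then show ?case by simp
next
  case (snoc x xs)
  then have h: "0 \<le> wval m xs" "wval m xs \<le> int m ^ length xs - 1" "x < m" by auto
  have "int m * wval m xs \<le> int m * (int m ^ length xs - 1)"
    using h by (intro mult_left_mono) auto
  then show ?case using h by (auto simp: algebra_simps)
qed

lemma wval_exists:
  assumes "m > 0" "M < m ^ n"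
  shows "\<exists>w. length w = n \<and> set w \<subseteq> {..<m} \<and> wval m w = int M"
  using assms(2)
proof (induction n arbitrary: M)
  case 0 then show ?case by simp
next
  case (Suc n)
  have "M div m < m ^ n"
    using Suc.prems assms(1) by (simp add: less_mult_imp_div_less mult.commute)
  then obtain w where w: "length w = n" "set w \<subseteq> {..<m}" "wval m w = int (M div m)"
    using Suc.IH by blast
  have "int M = int m * int (M div m) + int (M mod m)"
    by (metis div_mult_mod_eq of_nat_add of_nat_mult mult.commute)
  then show ?case using w assms(1)
    by (intro exI[of _ "w @ [M mod m]"]) auto
qed

fun Npre :: "nat \<Rightarrow> (nat \<Rightarrow> nat) \<Rightarrow> nat \<Rightarrow> int" where
  "Npre m d 0 = 0" | "Npre m d (Suc n) = int m * Npre m d n + int (d n)"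

lemma Npre_block:
  "Npre m d (n + K) = int m ^ K * Npre m d n + wval m (map (\<lambda>i. d (n+i)) [0..<K])"
  by (induction K) (simp_all add: algebra_simps)

lemma iter_frac: assumes "0 \<le> x" "x < 1" shows "(times_m_mod1 m ^^ n) x = frac (real m ^ n * x)"
proof (induction n)
  case 0 then show ?case using assms by (simp add: frac_eq)
next
  case (Suc n)
  have "frac (real m * frac y) = frac (real m * y)" for y
  proof -
    have "real m * frac y = real m * y + of_int (- (int m * \<lfloor>y\<rfloor>))"
      by (simp add: frac_def algebra_simps)
    then have "frac (real m * frac y) = frac (real m * y + of_int (- (int m * \<lfloor>y\<rfloor>)))"
      by (simp only:)
    also have "\<dots> = frac (real m * y)" by (rule frac_add_of_int_right)
    finally show ?thesis .
  qed
  then show ?case using Suc by (simp add: times_m_mod1_def mult.assoc)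
qed



locale useq =
  fixes m :: nat and d :: "nat \<Rightarrow> nat" and u :: real and p L :: int and a b :: real
  assumes m2: "m \<ge> 2" and dig: "\<forall>k. d k < m"
    and sums: "(\<lambda>k. real (d k) / real m ^ Suc k) sums u"
    and univ: "universal_expansion m d" and p0: "p \<noteq> 0" and L0: "L > 0"
    and a0: "0 \<le> a" and ab: "a < b" and b1: "b \<le> 1"
begin

definition run :: "int \<Rightarrow> nat list \<Rightarrow> int" where
  "run s w = int m ^ length w * s + p * wval m w"

definition hit :: "real \<Rightarrow> real \<Rightarrow> bool" where
  "hit y g \<longleftrightarrow> (\<exists>z::int. a < y / real_of_int L + real_of_int p / real_of_int L * g - real_of_int z
                         \<and> y / real_of_int L + real_of_int p / real_of_int L * g - real_of_int z < b)"

definition good :: "int \<Rightarrow> nat list \<Rightarrow> bool" where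
  "good s w \<longleftrightarrow> (\<exists>j K. j + K \<le> length w \<and>
     (\<forall>g. real_of_int (wval m (take K (drop j w))) / real m ^ K \<le> g \<and>
          g \<le> (real_of_int (wval m (take K (drop j w))) + 1) / real m ^ K
          \<longrightarrow> hit (real_of_int (run s (take j w))) g))"

lemma run_append: "run s (w1 @ w2) = run (run s w1) w2"
  by (simp add: run_def wval_append algebra_simps power_add)

lemma good_append: "good s w \<Longrightarrow> good s (w @ v)"
  unfolding good_def
  apply (elim exE conjE)
  subgoal for j K
    apply (rule exI[of _ j], rule exI[of _ K])
    apply (simp add: take_append drop_append)
    done
  done

lemma good_prepend: "good (run s w) v \<Longrightarrow> good s (w @ v)"
  unfolding good_def
  apply (elim exE conjE)
  subgoal for j K
    apply (rule exI[of _ "length w + j"], rule exI[of _ K])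
    apply (simp add: run_append)
    done
  done

lemma hit_shift: "hit (real_of_int (s + L * k)) g \<Longrightarrow> hit (real_of_int s) g"
proof -
  assume "hit (real_of_int (s + L * k)) g"
  then obtain z :: int where z:
    "a < real_of_int (s + L * k) / real_of_int L + real_of_int p / real_of_int L * g - real_of_int z"
    "real_of_int (s + L * k) / real_of_int L + real_of_int p / real_of_int L * g - real_of_int z < b"
    unfolding hit_def by blast
  have e: "real_of_int (s + L * k) / real_of_int L = real_of_int s / real_of_int L + real_of_int k"
    using L0 by (simp add: field_simps)
  show ?thesis unfolding hit_def
    by (rule exI[of _ "z - k"]) (use z e in auto)
qed

lemma hit_shift': "hit (real_of_int s) g \<Longrightarrow> hit (real_of_int (s + L * k)) g"
  using hit_shift[of "s + L * k" "- k" g] by simp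

lemma run_shift: "run (r0 + L * q) w = run r0 w + L * (int m ^ length w * q)"
  by (simp add: run_def algebra_simps)

lemma good_mod: "good (s mod L) w \<Longrightarrow> good s w"
proof -
  assume "good (s mod L) w"
  then obtain j K where jK: "j + K \<le> length w"
    "\<And>g. real_of_int (wval m (take K (drop j w))) / real m ^ K \<le> g \<Longrightarrow>
          g \<le> (real_of_int (wval m (take K (drop j w))) + 1) / real m ^ K
          \<Longrightarrow> hit (real_of_int (run (s mod L) (take j w))) g"
    unfolding good_def by blast
  have s: "s = s mod L + L * (s div L)" by simp
  have r: "run s (take j w) = run (s mod L) (take j w) + L * (int m ^ length (take j w) * (s div L))"
    using run_shift[of "s mod L" "s div L" "take j w"] s by simp
  show ?thesis unfolding good_def
  proof (intro exI conjI allI impI)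
    show "j + K \<le> length w" by (rule jK(1))
    fix g assume "real_of_int (wval m (take K (drop j w))) / real m ^ K \<le> g \<and>
          g \<le> (real_of_int (wval m (take K (drop j w))) + 1) / real m ^ K"
    then have "hit (real_of_int (run (s mod L) (take j w))) g" using jK(2) by blast
    then have "hit (real_of_int (run (s mod L) (take j w) + L * (int m ^ length (take j w) * (s div L)))) g"
      by (rule hit_shift')
    then show "hit (real_of_int (run s (take j w))) g"
      by (simp only: r)
  qed
qed

end

context useq begin

lemma single: "\<exists>v. set v \<subseteq> {..<m} \<and> good s v"
proof -
  have m1: "real m > 1" using m2 by simp
  have Lr: "real_of_int L > 0" using L0 by simp
  obtain J where J: "real_of_int L < real m ^ J" using real_arch_pow[OF m1] by blast
  define \<delta> where "\<delta> = (b - a) / 2"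
  define y0 where "y0 = (a + b) / 2"
  have dpos: "\<delta> > 0" using ab by (simp add: \<delta>_def)
  obtain K where K: "\<bar>real_of_int p\<bar> / (real_of_int L * \<delta>) < real m ^ K"
    using real_arch_pow[OF m1] by blast
  have mK: "real m ^ K > 0" using m1 by simp
  define \<xi> where "\<xi> = real m ^ J * real_of_int s / real_of_int L - y0"
  obtain z :: int and G :: real where G: "0 \<le> G" "G < real_of_int L"
    "real_of_int p * G / real_of_int L = real_of_int z - \<xi>"
  proof (cases "p > 0")
    case True
    define z where "z = \<lceil>\<xi>\<rceil>"
    define G where "G = real_of_int L * (real_of_int z - \<xi>) / real_of_int p"
    have z1: "0 \<le> real_of_int z - \<xi>" "real_of_int z - \<xi> < 1" unfolding z_def
      by (simp_all add: ceiling_le_iff) linarith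
    have p1: "real_of_int p \<ge> 1" using True by simp
    have "0 \<le> G" unfolding G_def using z1 Lr p1 by simp
    moreover have "G \<le> real_of_int L * (real_of_int z - \<xi>)"
    proof -
      have X: "0 \<le> real_of_int L * (real_of_int z - \<xi>)" using z1 Lr by simp
      have "real_of_int L * (real_of_int z - \<xi>) * 1 \<le> real_of_int L * (real_of_int z - \<xi>) * real_of_int p"
        using p1 X by (rule mult_left_mono)
      then show ?thesis unfolding G_def using p1 by (simp add: divide_le_eq)
    qed
    moreover have "real_of_int L * (real_of_int z - \<xi>) < real_of_int L" using z1 Lr by simp
    moreover have "real_of_int p * G / real_of_int L = real_of_int z - \<xi>"
      unfolding G_def using Lr p1 by simp
    ultimately show ?thesis using that by force
  next
    case False
    then have pn: "p < 0" using p0 by simp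
    define z where "z = \<lfloor>\<xi>\<rfloor>"
    define G where "G = real_of_int L * (\<xi> - real_of_int z) / (- real_of_int p)"
    have z1: "0 \<le> \<xi> - real_of_int z" "\<xi> - real_of_int z < 1" unfolding z_def
      by simp_all linarith
    have p1: "- real_of_int p \<ge> 1" using pn by simp
    have "0 \<le> G" unfolding G_def using z1 Lr p1 by (intro divide_nonneg_pos) auto
    moreover have "G \<le> real_of_int L * (\<xi> - real_of_int z)"
    proof -
      have X: "0 \<le> real_of_int L * (\<xi> - real_of_int z)" using z1 Lr by simp
      have "real_of_int L * (\<xi> - real_of_int z) * 1 \<le> real_of_int L * (\<xi> - real_of_int z) * (- real_of_int p)"
        using p1 X by (rule mult_left_mono)
      moreover have pp: "0 < - real_of_int p" using p1 by simp
      ultimately show ?thesis by (simp only: G_def pos_divide_le_eq[OF pp])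
    qed
    moreover have "real_of_int L * (\<xi> - real_of_int z) < real_of_int L" using z1 Lr by simp
    moreover have "real_of_int p * G / real_of_int L = real_of_int z - \<xi>"
      unfolding G_def using Lr p1 by (simp add: field_simps)
    ultimately show ?thesis using that by force
  qed
  define M where "M = nat \<lfloor>G * real m ^ K\<rfloor>"
  have GM0: "0 \<le> G * real m ^ K" using G mK by simp
  have M1: "real M \<le> G * real m ^ K" "G * real m ^ K < real M + 1"
    unfolding M_def using GM0 by (simp_all add: of_nat_nat)
  have "real M < real_of_int L * real m ^ K" using M1 G mK by (smt (verit) mult_strict_right_mono)
  also have "\<dots> < real m ^ J * real m ^ K" using J mK by simp
  finally have "M < m ^ (J + K)" by (simp add: power_add flip: of_nat_power of_nat_mult) 
  then obtain v where v: "length v = J + K" "set v \<subseteq> {..<m}" "wval m v = int M"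
    using wval_exists[of m M "J+K"] m2 by auto
  define v1 where "v1 = take J v"
  define v2 where "v2 = drop J v"
  have lv2: "length v2 = K" using v unfolding v2_def by simp
  have wv: "int M = int m ^ K * wval m v1 + wval m v2"
    using wval_append[of m v1 v2] v lv2 unfolding v1_def v2_def by simp
  have wvr: "real M = real m ^ K * real_of_int (wval m v1) + real_of_int (wval m v2)"
    using arg_cong[OF wv, of real_of_int] by simp
  have "good s v" unfolding good_def
  proof (intro exI conjI allI impI)
    show "J + K \<le> length v" using v by simp
    fix g
    assume g: "real_of_int (wval m (take K (drop J v))) / real m ^ K \<le> g \<and>
          g \<le> (real_of_int (wval m (take K (drop J v))) + 1) / real m ^ K"
    have tk: "take K (drop J v) = v2" using lv2 unfolding v2_def by simp
    define Gg where "Gg = real_of_int (wval m v1) + g"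
    have g1: "real_of_int (wval m v2) \<le> g * real m ^ K" "g * real m ^ K \<le> real_of_int (wval m v2) + 1"
      using g mK unfolding tk by (simp_all add: divide_le_eq le_divide_eq)
    have Gg1: "real M \<le> Gg * real m ^ K" "Gg * real m ^ K \<le> real M + 1"
      unfolding Gg_def wvr using g1 by (simp_all add: algebra_simps)
    have "\<bar>Gg * real m ^ K - G * real m ^ K\<bar> \<le> 1" using Gg1 M1 by linarith
    then have "\<bar>Gg - G\<bar> * real m ^ K \<le> 1" by (simp add: left_diff_distrib[symmetric] abs_mult mK)
    then have dG: "\<bar>Gg - G\<bar> \<le> 1 / real m ^ K" using mK by (simp add: le_divide_eq)
    have "\<bar>real_of_int p * (Gg - G) / real_of_int L\<bar> = \<bar>real_of_int p\<bar> * \<bar>Gg - G\<bar> / real_of_int L"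
      using Lr by (simp add: abs_mult)
    also have "\<dots> \<le> \<bar>real_of_int p\<bar> * (1 / real m ^ K) / real_of_int L"
      using dG Lr by (intro divide_right_mono mult_left_mono) auto
    also have "\<dots> < \<delta>"
    proof -
      have "\<bar>real_of_int p\<bar> < real m ^ K * (real_of_int L * \<delta>)"
        using K Lr dpos by (simp add: divide_less_eq mult.commute)
      then show ?thesis using Lr mK by (simp add: field_simps)
    qed
    finally have err: "\<bar>real_of_int p * (Gg - G) / real_of_int L\<bar> < \<delta>" .
    have eq: "real_of_int (run s (take J v)) / real_of_int L + real_of_int p / real_of_int L * g - real_of_int z
        = y0 + real_of_int p * (Gg - G) / real_of_int L"
    proof -
      have "real_of_int (run s (take J v)) / real_of_int L + real_of_int p / real_of_int L * g
          = \<xi> + y0 + real_of_int p * Gg / real_of_int L"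
        unfolding run_def \<xi>_def Gg_def v1_def using Lr v(1) by (simp add: field_simps min_def)
      then show ?thesis using G(3) Lr by (simp add: field_simps)
    qed
    show "hit (real_of_int (run s (take J v))) g" unfolding hit_def
    proof (rule exI[of _ z])
      have e2: "- \<delta> < real_of_int p * (Gg - G) / real_of_int L" "real_of_int p * (Gg - G) / real_of_int L < \<delta>"
        using err by (simp_all only: abs_less_iff) linarith+
      show "a < real_of_int (run s (take J v)) / real_of_int L + real_of_int p / real_of_int L * g - real_of_int z \<and>
        real_of_int (run s (take J v)) / real_of_int L + real_of_int p / real_of_int L * g - real_of_int z < b"
      proof -
        have aux1: "a < (a + b) / 2 + e" if "- ((b - a) / 2) < e" for e :: real using that by (simp add: field_simps)
        have aux2: "(a + b) / 2 + e < b" if "e < (b - a) / 2" for e :: real using that by (simp add: field_simps)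
        show ?thesis unfolding eq y0_def using aux1[OF e2(1)[unfolded \<delta>_def]] aux2[OF e2(2)[unfolded \<delta>_def]] by simp
      qed
    qed
  qed
  then show ?thesis using v by blast
qed

end

context useq begin

lemma all_states: "finite S \<Longrightarrow> \<exists>W. W \<noteq> [] \<and> set W \<subseteq> {..<m} \<and> (\<forall>s\<in>S. good s W)"
proof (induction S rule: finite_induct)
  case empty show ?case by (rule exI[of _ "[0]"]) (use m2 in auto)
next
  case (insert s0 S)
  then obtain W where W: "W \<noteq> []" "set W \<subseteq> {..<m}" "\<forall>s\<in>S. good s W" by blast
  obtain v where v: "set v \<subseteq> {..<m}" "good (run s0 W) v" using single by blast
  show ?case
    by (rule exI[of _ "W @ v"]) (use W v good_append good_prepend in auto)
qed

definition F :: "nat \<Rightarrow> real" where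
  "F n = real m ^ n * u - real_of_int (Npre m d n)"

definition Psum :: "nat \<Rightarrow> real" where
  "Psum K = (\<Sum>k<K. real (d k) / real m ^ Suc k)"

lemma Npre_Psum: "real_of_int (Npre m d K) = real m ^ K * Psum K"
proof (induction K)
  case 0 then show ?case by (simp add: Psum_def)
next
  case (Suc K)
  have m0: "real m \<noteq> 0" using m2 by simp
  show ?case using Suc m0 by (simp add: Psum_def algebra_simps)
qed

lemma block_bounds: "0 \<le> wval m (map (\<lambda>i. d (n+i)) [0..<j]) \<and> wval m (map (\<lambda>i. d (n+i)) [0..<j]) < int m ^ j"
proof -
  have "set (map (\<lambda>i. d (n+i)) [0..<j]) \<subseteq> {..<m}" using dig by auto
  from wval_bounds[OF this] show ?thesis by simp
qed

lemma F_step: "F n = (real_of_int (wval m (map (\<lambda>i. d (n+i)) [0..<K])) + F (n + K)) / real m ^ K"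
proof -
  have m0: "real m ^ K \<noteq> 0" using m2 by simp
  have "real_of_int (Npre m d (n + K)) = real m ^ K * real_of_int (Npre m d n) + real_of_int (wval m (map (\<lambda>i. d (n+i)) [0..<K]))"
    using arg_cong[OF Npre_block[of m d n K], of real_of_int] by simp
  then show ?thesis unfolding F_def using m0 m2 by (simp add: field_simps power_add)
qed

lemma F_bounds: "0 \<le> F n \<and> F n \<le> 1"
proof -
  have P: "Psum \<longlonglongrightarrow> u" using sums unfolding sums_def Psum_def by simp
  define X where "X j = real m ^ n * Psum (j + n) - real_of_int (Npre m d n)" for j
  have XF: "X \<longlonglongrightarrow> F n" unfolding X_def F_def
    by (intro tendsto_intros LIMSEQ_ignore_initial_segment[OF P])
  have Xb: "0 \<le> X j \<and> X j \<le> 1" for j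
  proof -
    have mj: "real m ^ j > 0" using m2 by simp
    have "X j = real_of_int (Npre m d (j + n)) / real m ^ j - real_of_int (Npre m d n)"
      unfolding X_def Npre_Psum using mj m2 by (simp add: field_simps power_add)
    also have "\<dots> = real_of_int (wval m (map (\<lambda>i. d (n+i)) [0..<j])) / real m ^ j"
      using arg_cong[OF Npre_block[of m d n j], of real_of_int] mj by (simp add: field_simps add.commute)
    finally have e: "X j = real_of_int (wval m (map (\<lambda>i. d (n+i)) [0..<j])) / real m ^ j" .
    have b0: "0 \<le> real_of_int (wval m (map (\<lambda>i. d (n+i)) [0..<j]))"
      "real_of_int (wval m (map (\<lambda>i. d (n+i)) [0..<j])) \<le> real m ^ j"
      using block_bounds[of n j] by (simp_all, metis less_imp_le of_int_le_iff of_int_of_nat_eq of_nat_power)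
    show ?thesis unfolding e using b0 mj by (simp add: divide_le_eq)
  qed
  have "0 \<le> F n" by (rule LIMSEQ_le_const[OF XF]) (use Xb in auto)
  moreover have "F n \<le> 1" by (rule LIMSEQ_le_const2[OF XF]) (use Xb in auto)
  ultimately show ?thesis by simp
qed

lemma escape:
  "\<exists>n. frac (real m ^ n * (real_of_int p / real_of_int L * u + real_of_int c / real_of_int L)) \<in> {a<..<b}"
proof -
  obtain W where W: "W \<noteq> []" "set W \<subseteq> {..<m}" "\<forall>s\<in>{0..<L}. good s W"
    using all_states[of "{0..<L}"] by auto
  obtain k0 where k0: "\<forall>i<length W. d (k0 + i) = W ! i"
    using univ W unfolding universal_expansion_def by blast
  define S0 where "S0 = p * Npre m d k0 + int m ^ k0 * c"
  have "S0 mod L \<in> {0..<L}" using L0 by simp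
  then have "good (S0 mod L) W" using W by blast
  then have "good S0 W" by (rule good_mod)
  then obtain j K where jK: "j + K \<le> length W"
    "\<And>g. real_of_int (wval m (take K (drop j W))) / real m ^ K \<le> g \<Longrightarrow>
          g \<le> (real_of_int (wval m (take K (drop j W))) + 1) / real m ^ K
          \<Longrightarrow> hit (real_of_int (run S0 (take j W))) g"
    unfolding good_def by blast
  define n where "n = k0 + j"
  have tj: "take j W = map (\<lambda>i. d (k0+i)) [0..<j]"
    using jK(1) k0 by (intro nth_equalityI) auto
  have tK: "take K (drop j W) = map (\<lambda>i. d (n+i)) [0..<K]"
    using jK(1) k0 unfolding n_def by (intro nth_equalityI) (auto simp: add.assoc)
  have run_eq: "run S0 (take j W) = p * Npre m d n + int m ^ n * c"
    unfolding tj run_def S0_def n_def Npre_block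
    by (simp add: algebra_simps power_add)
  define E where "E = real_of_int (wval m (take K (drop j W)))"
  have mK: "real m ^ K > 0" using m2 by simp
  have Fs: "F n = (E + F (n + K)) / real m ^ K" unfolding E_def tK by (rule F_step)
  have g1: "E / real m ^ K \<le> F n" "F n \<le> (E + 1) / real m ^ K"
    unfolding Fs using F_bounds[of "n+K"] mK by (simp_all add: divide_right_mono)
  have "hit (real_of_int (run S0 (take j W))) (F n)"
    using jK(2) g1 unfolding E_def by blast
  then obtain z :: int where z:
    "a < real_of_int (run S0 (take j W)) / real_of_int L + real_of_int p / real_of_int L * F n - real_of_int z"
    "real_of_int (run S0 (take j W)) / real_of_int L + real_of_int p / real_of_int L * F n - real_of_int z < b"
    unfolding hit_def by blast
  define y where "y = real m ^ n * (real_of_int p / real_of_int L * u + real_of_int c / real_of_int L)"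
  have yeq: "real_of_int (run S0 (take j W)) / real_of_int L + real_of_int p / real_of_int L * F n = y"
    unfolding run_eq y_def F_def using L0 by (simp add: field_simps)
  have z2: "a < y - real_of_int z" "y - real_of_int z < b" using z yeq by simp_all
  have "\<lfloor>y\<rfloor> = z" using z2 a0 b1 by (intro floor_unique) linarith+
  then have "frac y = y - real_of_int z" by (simp add: frac_def)
  then have "frac y \<in> {a<..<b}" using z2 by simp
  then show ?thesis unfolding y_def by blast
qed

end


lemma not_survivor:
  assumes m2: "m \<ge> 2" and ex: "is_m_adic_expansion m d u" and un: "universal_expansion m d"
    and r: "r \<in> \<rat>" "r \<noteq> 0" and q: "q \<in> \<rat>"
    and a0: "0 \<le> a" and ab: "a < b" and b1: "b \<le> 1"
    and x: "x \<in> survivor_set m a b" and xe: "x = r * u + q"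
  shows False
proof -
  obtain p1 L1 :: int where L1: "L1 > 0" "r = real_of_int p1 / real_of_int L1"
    using Rats_cases'[OF r(1)] by metis
  obtain c2 L2 :: int where L2: "L2 > 0" "q = real_of_int c2 / real_of_int L2"
    using Rats_cases'[OF q] by metis
  define p where "p = p1 * L2"
  define L where "L = L1 * L2"
  define c where "c = c2 * L1"
  have rr: "r = real_of_int p / real_of_int L" unfolding p_def L_def L1 using L1 L2 by simp
  have qq: "q = real_of_int c / real_of_int L" unfolding c_def L_def L2 using L1 L2 by simp
  have p0: "p \<noteq> 0" using r(2) L2 unfolding p_def L1 by auto
  have L0: "L > 0" unfolding L_def using L1 L2 by simp
  interpret useq m d u p L a b
    using m2 ex un p0 L0 a0 ab b1 unfolding is_m_adic_expansion_def by unfold_locales auto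
  obtain n where n: "frac (real m ^ n * (real_of_int p / real_of_int L * u + real_of_int c / real_of_int L)) \<in> {a<..<b}"
    using escape by blast
  have x01: "0 \<le> x" "x < 1" and nh: "\<forall>n. (times_m_mod1 m ^^ n) x \<notin> {a<..<b}"
    using x unfolding survivor_set_def by auto
  have "(times_m_mod1 m ^^ n) x = frac (real m ^ n * x)" using iter_frac[OF x01] .
  also have "\<dots> = frac (real m ^ n * (real_of_int p / real_of_int L * u + real_of_int c / real_of_int L))"
    unfolding xe rr qq ..
  finally have "(times_m_mod1 m ^^ n) x \<in> {a<..<b}" using n by simp
  then show False using nh by blast
qed

theorem corollary2:
  fixes m :: nat and a b :: real
  assumes "m \<ge> 2" and "0 \<le> a" and "a < b" and "b \<le> 1"
  shows "(\<forall>t. 0 < t \<and> t < 1 \<and> has_universal_expansion m t \<longrightarrow>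
            (\<lambda>x. x - t) ` survivor_set m a b \<subseteq> - \<rat> \<and>
            (\<lambda>x. x + t) ` survivor_set m a b \<subseteq> - \<rat> \<and>
            (\<lambda>x. x / t) ` (survivor_set m a b - {0}) \<subseteq> - \<rat>)
       \<and> (\<forall>t. 1 < t \<and> has_universal_expansion m (1 / t) \<longrightarrow>
            (\<lambda>x. t * x) ` (survivor_set m a b - {0}) \<subseteq> - \<rat>)"
proof (intro conjI allI impI)
  fix t :: real
  assume t: "0 < t \<and> t < 1 \<and> has_universal_expansion m t"
  then obtain d where d: "is_m_adic_expansion m d t" "universal_expansion m d"
    unfolding has_universal_expansion_def by blast
  show "(\<lambda>x. x - t) ` survivor_set m a b \<subseteq> - \<rat>"
  proof
    fix y assume "y \<in> (\<lambda>x. x - t) ` survivor_set m a b"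
    then obtain x where x: "x \<in> survivor_set m a b" "y = x - t" by blast
    show "y \<in> - \<rat>"
    proof
      assume "y \<in> \<rat>"
      moreover have "x = 1 * t + y" using x(2) by simp
      ultimately show False
        using not_survivor[OF assms(1) d(1) d(2) Rats_1 one_neq_zero _ assms(2-4) x(1)] by blast
    qed
  qed
  show "(\<lambda>x. x + t) ` survivor_set m a b \<subseteq> - \<rat>"
  proof
    fix y assume "y \<in> (\<lambda>x. x + t) ` survivor_set m a b"
    then obtain x where x: "x \<in> survivor_set m a b" "y = x + t" by blast
    show "y \<in> - \<rat>"
    proof
      assume "y \<in> \<rat>"
      moreover have m1: "(-1::real) \<in> \<rat>" by simp
      moreover have "x = (-1) * t + y" using x(2) by simp
      moreover have "(-1::real) \<noteq> 0" by simp
      ultimately show False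
        using not_survivor[OF assms(1) d(1) d(2)] assms(2-4) x(1) by blast
    qed
  qed
  show "(\<lambda>x. x / t) ` (survivor_set m a b - {0}) \<subseteq> - \<rat>"
  proof
    fix y assume "y \<in> (\<lambda>x. x / t) ` (survivor_set m a b - {0})"
    then obtain x where x: "x \<in> survivor_set m a b" "x \<noteq> 0" "y = x / t" by blast
    have ty: "x = y * t + 0" "y \<noteq> 0" using x t by auto
    show "y \<in> - \<rat>"
    proof
      assume "y \<in> \<rat>"
      then show False
        using not_survivor[OF assms(1) d(1) d(2) _ ty(2) Rats_0 assms(2-4) x(1) ty(1)] by blast
    qed
  qed
next
  fix t :: real
  assume t: "1 < t \<and> has_universal_expansion m (1 / t)"
  then obtain d where d: "is_m_adic_expansion m d (1/t)" "universal_expansion m d"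
    unfolding has_universal_expansion_def by blast
  show "(\<lambda>x. t * x) ` (survivor_set m a b - {0}) \<subseteq> - \<rat>"
  proof
    fix y assume "y \<in> (\<lambda>x. t * x) ` (survivor_set m a b - {0})"
    then obtain x where x: "x \<in> survivor_set m a b" "x \<noteq> 0" "y = t * x" by blast
    have ty: "x = y * (1/t) + 0" "y \<noteq> 0" using x t by auto
    show "y \<in> - \<rat>"
    proof
      assume "y \<in> \<rat>"
      then show False
        using not_survivor[OF assms(1) d(1) d(2) _ ty(2) Rats_0 assms(2-4) x(1) ty(1)] by blast
    qed
  qed
qed


end
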